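(* Let $\mathcal C$ be a linear $[n,k]$ MDS code over $F$ and let $L\in\mathbb Z^+$ satisfy $L\le\binom{n-1}{k-1}$. If $\mathcal C$ is strongly-$(\tau,L)$-list decodable (for some nonnegative $\tau\in\frac{1}{L+1}\mathbb Z$), then $\tau\le\frac{L(n-k)}{L+1}$.
   Context: $F=\mathrm{GF}(q)$; $\mathsf w(\cdot)$ denotes Hamming weight. For $L\in\mathbb Z^+$ and nonnegative $\tau\in\frac{1}{L+1}\mathbb Z$ (rationals of the form $b/(L+1)$, $b\in\mathbb Z$), a code $\mathcal C\subseteq F^n$ is strongly-$(\tau,L)$-list decodable if there do not exist $y\in F^n$ and $L+1$ distinct codewords $c_0,\dots,c_L\in\mathcal C$ with $\sum_{m=0}^{L}\mathsf w(y-c_m)\le(L+1)\tau$. *)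

theory Defs
  imports Complex_Main "HOL-Library.Function_Algebras"
begin

text \<open>Vectors of F^n are represented as functions nat => F that vanish outside {..<n}.
  F = GF(q) is an arbitrary finite field type.\<close>

definition fscale :: "'a::field \<Rightarrow> (nat \<Rightarrow> 'a) \<Rightarrow> (nat \<Rightarrow> 'a)" where
  "fscale c v = (\<lambda>i. c * v i)"

interpretation fvs: vector_space "fscale :: 'a::field \<Rightarrow> (nat \<Rightarrow> 'a) \<Rightarrow> (nat \<Rightarrow> 'a)"
  by unfold_locales (auto simp: fscale_def algebra_simps)

definition ambient :: "nat \<Rightarrow> (nat \<Rightarrow> 'a::zero) set" where
  "ambient n = {v. \<forall>i\<ge>n. v i = 0}"

definition hw :: "nat \<Rightarrow> (nat \<Rightarrow> 'a::zero) \<Rightarrow> nat" where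
  "hw n v = card {i. i < n \<and> v i \<noteq> 0}"

definition linear_code :: "nat \<Rightarrow> nat \<Rightarrow> (nat \<Rightarrow> 'a::field) set \<Rightarrow> bool" where
  "linear_code n k C \<longleftrightarrow> C \<subseteq> ambient n \<and> fvs.subspace C \<and> fvs.dim C = k"

definition min_dist :: "nat \<Rightarrow> (nat \<Rightarrow> 'a::ab_group_add) set \<Rightarrow> nat" where
  "min_dist n C = Min {hw n (c - c') | c c'. c \<in> C \<and> c' \<in> C \<and> c \<noteq> c'}"

definition MDS_code :: "nat \<Rightarrow> nat \<Rightarrow> (nat \<Rightarrow> 'a::field) set \<Rightarrow> bool" where
  "MDS_code n k C \<longleftrightarrow> linear_code n k C \<and> min_dist n C = n - k + 1"

text \<open>Strong (tau,L)-list decodability; tau is a nonnegative real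
  (the hypothesis tau in 1/(L+1) Z is stated separately).\<close>
definition strongly_list_decodable ::
  "nat \<Rightarrow> (nat \<Rightarrow> 'a::ab_group_add) set \<Rightarrow> real \<Rightarrow> nat \<Rightarrow> bool" where
  "strongly_list_decodable n C \<tau> L \<longleftrightarrow>
     \<not> (\<exists>y \<in> ambient n. \<exists>c :: nat \<Rightarrow> (nat \<Rightarrow> 'a).
          inj_on c {0..L} \<and> (\<forall>m\<in>{0..L}. c m \<in> C) \<and>
          real (\<Sum>m=0..L. hw n (y - c m)) \<le> real (L + 1) * \<tau>)"

end

theory Submission imports Defs "HOL-Library.FuncSet" begin
lemma finite_ambient: "finite (ambient n :: (nat \<Rightarrow> 'a::{finite,zero}) set)"
proof -
  have "ambient n \<subseteq> (\<lambda>f i. if i < n then f i else 0) ` (PiE {..<n} (\<lambda>_. (UNIV::'a set)))"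
  proof
    fix v :: "nat \<Rightarrow> 'a" assume "v \<in> ambient n"
    hence "v = (\<lambda>i. if i < n then (restrict v {..<n}) i else 0)"
      by (auto simp: ambient_def fun_eq_iff restrict_def)
    thus "v \<in> (\<lambda>f i. if i < n then f i else 0) ` (PiE {..<n} (\<lambda>_. (UNIV::'a set)))"
      by (rule image_eqI[where x="restrict v {..<n}"]) auto
  qed
  moreover have "finite ((\<lambda>f i. if i < n then f i else 0) ` (PiE {..<n} (\<lambda>_. (UNIV::'a set))))"
    by (intro finite_imageI finite_PiE) auto
  ultimately show ?thesis by (rule finite_subset)
qed

lemma dim_hyper:
  assumes sub: "fvs.subspace V" and fin: "finite V"
  shows "fvs.dim V \<le> fvs.dim {v\<in>V. v i = (0::'a::field)} + 1"
proof (cases "\<forall>v\<in>V. v i = 0")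
  case True
  hence "{v\<in>V. v i = 0} = V" by auto
  thus ?thesis by simp
next
  case False
  then obtain b where b: "b \<in> V" "b i \<noteq> 0" by auto
  define W where "W = {v\<in>V. v i = 0}"
  obtain B where B: "B \<subseteq> W" "fvs.independent B" "W \<subseteq> fvs.span B" "card B = fvs.dim W"
    using fvs.basis_exists[of W] by blast
  have finB: "finite B" using B(1) fin unfolding W_def by (auto intro: finite_subset)
  have "V \<subseteq> fvs.span (insert b B)"
  proof
    fix v assume v: "v \<in> V"
    define k where "k = v i / b i"
    have "v - fscale k b \<in> V"
      using sub v b(1) fvs.subspace_diff fvs.subspace_scale by blast
    moreover have "(v - fscale k b) i = 0" using b(2) by (simp add: k_def fscale_def)
    ultimately have "v - fscale k b \<in> W" by (simp add: W_def)
    hence "v - fscale k b \<in> fvs.span B" using B(3) by blast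
    thus "v \<in> fvs.span (insert b B)" using fvs.span_breakdown_eq by blast
  qed
  hence "fvs.dim V \<le> card (insert b B)" using fvs.dim_le_card finB by blast
  also have "\<dots> \<le> card B + 1" by (simp add: card_insert_if finB)
  finally show ?thesis using B(4) W_def by simp
qed
definition Z :: "(nat \<Rightarrow> 'a::field) set \<Rightarrow> nat set \<Rightarrow> (nat \<Rightarrow> 'a) set" where
  "Z C S = {v\<in>C. \<forall>i\<in>S. v i = 0}"

lemma Z_subspace: "fvs.subspace C \<Longrightarrow> fvs.subspace (Z C S)"
proof -
  assume a: "fvs.subspace C"
  have z: "0 \<in> C" and ad: "\<And>x y. x \<in> C \<Longrightarrow> y \<in> C \<Longrightarrow> x + y \<in> C"
    and sc: "\<And>c x. x \<in> C \<Longrightarrow> fscale c x \<in> C"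
    using a unfolding fvs.subspace_def by blast+
  show ?thesis unfolding fvs.subspace_def Z_def using z ad sc by (auto simp: fscale_def)
qed

lemma Z_dim:
  assumes "finite S" "fvs.subspace C" "finite C"
  shows "fvs.dim C \<le> fvs.dim (Z C S) + card S"
  using assms(1)
proof (induction S rule: finite_induct)
  case empty
  then show ?case by (simp add: Z_def)
next
  case (insert j S)
  have e: "Z C (insert j S) = {v\<in>Z C S. v j = 0}" by (auto simp: Z_def)
  have "fvs.dim (Z C S) \<le> fvs.dim (Z C (insert j S)) + 1"
  proof -
    have "finite (Z C S)" using assms(3) by (simp add: Z_def)
    thus ?thesis unfolding e by (rule dim_hyper[OF Z_subspace[OF assms(2)]])
  qed
  thus ?case using insert by simp
qed

lemma exists_cw:
  fixes C :: "(nat \<Rightarrow> 'a::{finite,field}) set"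
  assumes mds: "MDS_code n k C" and k1: "1 \<le> k" and kn: "k \<le> n"
    and S: "S \<subseteq> {..<n-1}" "card S = k - 1"
  shows "\<exists>v. v \<in> C \<and> v (n-1) = 1 \<and> (\<forall>i\<in>S. v i = 0) \<and> (\<forall>i<n. i \<notin> S \<longrightarrow> v i \<noteq> 0)"
proof -
  have lc: "C \<subseteq> ambient n" "fvs.subspace C" "fvs.dim C = k"
    using mds by (auto simp: MDS_code_def linear_code_def)
  have md: "min_dist n C = n - k + 1" using mds by (simp add: MDS_code_def)
  have finC: "finite C" using lc(1) finite_ambient finite_subset by blast
  have finS: "finite S" using S(1) finite_subset by blast
  have "k \<le> fvs.dim (Z C S) + (k - 1)" using Z_dim[OF finS lc(2) finC] lc(3) S(2) by simp
  hence dpos: "fvs.dim (Z C S) \<ge> 1" using k1 by linarith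
  have "\<not> Z C S \<subseteq> {0}"
  proof
    assume "Z C S \<subseteq> {0}"
    hence "Z C S \<subseteq> fvs.span {}" using fvs.span_zero by blast
    hence "fvs.dim (Z C S) \<le> card ({}::(nat\<Rightarrow>'a) set)" using fvs.dim_le_card by blast
    thus False using dpos by simp
  qed
  then obtain v where v: "v \<in> C" "\<forall>i\<in>S. v i = 0" "v \<noteq> 0" by (auto simp: Z_def)
  have zC: "0 \<in> C" using lc(2) fvs.subspace_0 by blast
  define D where "D = {hw n (c - c') | c c'. c \<in> C \<and> c' \<in> C \<and> c \<noteq> c'}"
  have "D \<subseteq> (\<lambda>(c,c'). hw n (c - c')) ` (C \<times> C)" unfolding D_def by auto
  hence finD: "finite D" by (rule finite_subset) (simp add: finC)
  have "hw n (v - 0) \<in> D" unfolding D_def using v zC by blast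
  hence "Min D \<le> hw n v" using finD by simp
  hence hv: "n - k + 1 \<le> hw n v" using md by (simp add: min_dist_def D_def)
  define sup where "sup = {i. i < n \<and> v i \<noteq> 0}"
  have sub: "sup \<subseteq> {..<n} - S" using v(2) by (auto simp: sup_def)
  have cS: "card ({..<n} - S) = n - (k - 1)"
    using S by (subst card_Diff_subset) (auto intro: finite_subset)
  have "card sup \<ge> card ({..<n} - S)" using hv cS kn k1 by (simp add: hw_def sup_def)
  hence supeq: "sup = {..<n} - S" using sub by (intro card_seteq) simp_all
  have n1: "n - 1 \<notin> S" "n - 1 < n" using S kn k1 by auto
  have pt: "\<And>i. i < n \<Longrightarrow> i \<notin> S \<Longrightarrow> v i \<noteq> 0"
  proof -
    fix i assume "i < n" "i \<notin> S"
    hence "i \<in> sup" using supeq by blast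
    thus "v i \<noteq> 0" unfolding sup_def by blast
  qed
  have vp: "v (n-1) \<noteq> 0" using pt n1 by blast
  define w where "w = fscale (1 / v (n-1)) v"
  have "w \<in> C" using lc(2) v(1) fvs.subspace_scale unfolding w_def by blast
  moreover have "w (n-1) = 1" using vp by (simp add: w_def fscale_def)
  moreover have "\<forall>i\<in>S. w i = 0" using v(2) by (simp add: w_def fscale_def)
  moreover have "\<forall>i<n. i \<notin> S \<longrightarrow> w i \<noteq> 0" using pt vp
    by (simp add: w_def fscale_def)
  ultimately show ?thesis by blast
qed

theorem mainTheorem7:
  fixes C :: "(nat \<Rightarrow> 'a::{finite,field}) set"
    and n k L :: nat and \<tau> :: real
  assumes "MDS_code n k C"
    and "1 \<le> k" and "k \<le> n"
    and "L \<ge> 1"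
    and "L \<le> (n - 1) choose (k - 1)"
    and "\<tau> \<ge> 0"
    and "\<exists>b::int. \<tau> = real_of_int b / real (L + 1)"
    and "strongly_list_decodable n C \<tau> L"
  shows "\<tau> \<le> real (L * (n - k)) / real (L + 1)"
proof (rule ccontr)
  assume neg: "\<not> ?thesis"
  note mds = assms(1) and k1 = assms(2) and kn = assms(3)
  define p where "p = n - 1"
  have pn: "p < n" using k1 kn by (simp add: p_def)
  obtain b :: int where b: "\<tau> = real_of_int b / real (L + 1)" using assms(7) by blast
  have Lpos: "real (L + 1) > 0" by simp
  have "real (L * (n - k)) < real_of_int b"
  proof (rule ccontr)
    assume "\<not> real (L * (n - k)) < real_of_int b"
    hence "real_of_int b / real (L + 1) \<le> real (L * (n - k)) / real (L + 1)"
      using Lpos by (intro divide_right_mono) auto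
    thus False using neg b by simp
  qed
  hence "real_of_int (int (L * (n - k))) < real_of_int b" by simp
  hence "int (L * (n - k)) < b" by (simp only: of_int_less_iff)
  hence bge: "int (L * (n - k)) + 1 \<le> b" by simp
  hence "real_of_int (int (L * (n - k)) + 1) \<le> real_of_int b" by (simp only: of_int_le_iff)
  hence t1: "real (L * (n - k)) + 1 \<le> real_of_int b" by simp
  have t2: "real (L + 1) * \<tau> = real_of_int b" using b Lpos by simp
  have tauge: "real (L * (n - k)) + 1 \<le> real (L + 1) * \<tau>"
    using t1 t2 by linarith
  define T where "T = {S. S \<subseteq> {..<n-1} \<and> card S = k - 1}"
  have cT: "card T = (n - 1) choose (k - 1)" unfolding T_def using n_subsets[of "{..<n-1}" "k-1"] by simp
  have finT: "finite T" unfolding T_def by (rule finite_subset[of _ "Pow {..<n-1}"]) auto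
  obtain Sel where Sel: "Sel ` {1..L} \<subseteq> T" "inj_on Sel {1..L}"
    using card_le_inj[of "{1..L}" T] finT cT assms(5) by auto
  define P where "P = (\<lambda>S v. v \<in> C \<and> v p = 1 \<and> (\<forall>i\<in>S. v i = 0) \<and> (\<forall>i<n. i \<notin> S \<longrightarrow> v i \<noteq> (0::'a)))"
  define c where "c = (\<lambda>m. if m = 0 then 0 else (SOME v. P (Sel m) v))"
  have cP: "P (Sel m) (c m)" if "m \<in> {1..L}" for m
  proof -
    have "Sel m \<in> T" using Sel(1) that by blast
    hence "\<exists>v. P (Sel m) v" unfolding P_def p_def T_def using exists_cw[OF mds k1 kn] by blast
    thus ?thesis using that unfolding c_def by (simp add: someI_ex)
  qed
  have lc: "C \<subseteq> ambient n" "fvs.subspace C"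
    using mds by (auto simp: MDS_code_def linear_code_def)
  have zC: "(0::nat\<Rightarrow>'a) \<in> C" using lc(2) fvs.subspace_0 by blast
  define y :: "nat \<Rightarrow> 'a" where "y = (\<lambda>i. if i = p then 1 else 0)"
  have yA: "y \<in> ambient n" using pn by (auto simp: ambient_def y_def)
  have cC: "\<forall>m\<in>{0..L}. c m \<in> C"
  proof
    fix m assume "m \<in> {0..L}"
    thus "c m \<in> C" using cP[of m] zC by (cases "m = 0") (auto simp: c_def P_def)
  qed
  have SelT: "Sel m \<subseteq> {..<n-1}" "card (Sel m) = k - 1" if "m \<in> {1..L}" for m
    using Sel(1) that unfolding T_def by blast+
  have Sel_rec: "Sel m = {i. i < n - 1 \<and> c m i = 0}" if "m \<in> {1..L}" for m
  proof -
    have "\<forall>i\<in>Sel m. c m i = 0" "\<forall>i<n. i \<notin> Sel m \<longrightarrow> c m i \<noteq> 0"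
      using cP[OF that] unfolding P_def by blast+
    moreover have "\<forall>i. i < n - 1 \<longrightarrow> i < n" by auto
    ultimately show ?thesis using SelT(1)[OF that] by auto
  qed
  have inj: "inj_on c {0..L}"
  proof (rule inj_onI)
    fix a a' assume a: "a \<in> {0..L}" "a' \<in> {0..L}" "c a = c a'"
    show "a = a'"
    proof (cases "a = 0 \<or> a' = 0")
      case True
      have ne: "c m \<noteq> 0" if "m \<in> {1..L}" for m
      proof
        assume "c m = 0"
        moreover have "c m p = 1" using cP[OF that] unfolding P_def by blast
        ultimately show False by simp
      qed
      show ?thesis
      proof (rule ccontr)
        assume "a \<noteq> a'"
        then consider "a = 0" "a' \<in> {1..L}" | "a' = 0" "a \<in> {1..L}" using True a by auto
        thus False using ne a(3) by (cases) (auto simp: c_def)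
      qed
    next
      case False
      hence "a \<in> {1..L}" "a' \<in> {1..L}" using a by auto
      hence "Sel a = Sel a'" using Sel_rec a(3) by metis
      thus ?thesis using Sel(2) \<open>a \<in> {1..L}\<close> \<open>a' \<in> {1..L}\<close> by (meson inj_onD)
    qed
  qed
  have hw0: "hw n (y - c 0) = 1"
  proof -
    have "{i. i < n \<and> (y - c 0) i \<noteq> 0} = {p}" using pn by (auto simp: y_def c_def)
    thus ?thesis by (simp add: hw_def)
  qed
  have hwm: "hw n (y - c m) = n - k" if m: "m \<in> {1..L}" for m
  proof -
    have h: "c m p = 1" "\<forall>i\<in>Sel m. c m i = 0" "\<forall>i<n. i \<notin> Sel m \<longrightarrow> c m i \<noteq> 0"
      using cP[OF m] unfolding P_def by blast+
    have pS: "p \<notin> Sel m" using SelT(1)[OF m] by (auto simp: p_def)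
    have "{i. i < n \<and> (y - c m) i \<noteq> 0} = {..<n} - Sel m - {p}"
      using h by (auto simp: y_def)
    moreover have "card ({..<n} - Sel m - {p}) = n - k"
    proof -
      have fS: "finite (Sel m)" using SelT(1)[OF m] finite_subset by blast
      have "card ({..<n} - Sel m) = n - (k - 1)"
        using SelT[OF m] pn by (subst card_Diff_subset) (auto simp: fS p_def)
      moreover have "p \<in> {..<n} - Sel m" using pn pS by simp
      ultimately show ?thesis using k1 kn by (simp add: card_Diff_singleton)
    qed
    ultimately show ?thesis by (simp add: hw_def)
  qed
  have "(\<Sum>m=0..L. hw n (y - c m)) = hw n (y - c 0) + (\<Sum>m=Suc 0..L. hw n (y - c m))"
    by (simp add: sum.atLeast_Suc_atMost)
  also have "(\<Sum>m=Suc 0..L. hw n (y - c m)) = (\<Sum>m=Suc 0..L. n - k)"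
    by (rule sum.cong) (auto simp: hwm)
  also have "(\<Sum>m=Suc 0..L. n - k) = L * (n - k)" by simp
  finally have sumeq: "(\<Sum>m=0..L. hw n (y - c m)) = 1 + L * (n - k)" using hw0 by linarith
  have "real (\<Sum>m=0..L. hw n (y - c m)) \<le> real (L + 1) * \<tau>"
    using sumeq tauge by simp
  hence "\<exists>y \<in> ambient n. \<exists>c :: nat \<Rightarrow> (nat \<Rightarrow> 'a).
          inj_on c {0..L} \<and> (\<forall>m\<in>{0..L}. c m \<in> C) \<and>
          real (\<Sum>m=0..L. hw n (y - c m)) \<le> real (L + 1) * \<tau>"
    using yA inj cC by blast
  thus False using assms(8) unfolding strongly_list_decodable_def by blast
qed

end
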